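(* Let $\mu>0$, $p\in(0,1]$, and let $\mathcal{B}_\mu$ be the collection of all $\{0,1,2,\dots\}$-valued random variables $D$ with $\mathbb{E}(D)=\mu$. Let $q^*=\inf_{D\in\mathcal{B}_\mu}q_{D,p}$. Then there exist $k\in\mathbb{N}$ and $D^*\in\mathcal{B}_\mu$ with $$\mathbb{P}(D^*=0)+\mathbb{P}(D^*=k)+\mathbb{P}(D^*=k+1)=1$$ such that $q_{D^*,p}=q^*$.
   Context: For an $\{0,1,2,\dots\}$-valued $D$ with $0<\mu_D=\mathbb{E}(D)<\infty$: $f_D(s)=\mathbb{E}(s^D)$, $\bar f_D(s)=f_D'(s)/\mu_D$ for $s\in[0,1]$. For $p\in(0,1]$ (thinning parameter: in the configuration model with i.i.d. degrees distributed as $D$, each edge is kept independently with probability $p$), set $g_{D,p}(s)=f_D(1-p+ps)$ and $\bar g_{D,p}(s)=\bar f_D(1-p+ps)$. $z_{D,p}$ is the smallest root in $[0,1]$ of $s=\bar g_{D,p}(s)$ and $q_{D,p}:=g_{D,p}(z_{D,p})$. ($1-q_{D,p}$ is the limiting fraction of vertices in the largest component of the thinned configuration model.) $\mathbb{N}=\{1,2,\dots\}$. *)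

theory Defs
  imports "HOL-Probability.Probability"
begin

text \<open>A {0,1,2,...}-valued random variable D is represented by its law, a pmf on nat.\<close>

definition mean_D :: "nat pmf \<Rightarrow> real" where
  "mean_D D = measure_pmf.expectation D real"

definition B_class :: "real \<Rightarrow> nat pmf set" where
  "B_class \<mu> = {D. integrable (measure_pmf D) real \<and> mean_D D = \<mu>}"

definition f_D :: "nat pmf \<Rightarrow> real \<Rightarrow> real" where
  "f_D D s = measure_pmf.expectation D (\<lambda>k. s ^ k)"

text \<open>f_D'(s) = E(D s^(D-1)) (termwise derivative of the power series, for s in [0,1]);
  fbar_D(s) = f_D'(s) / mu_D.\<close>
definition f_D_deriv :: "nat pmf \<Rightarrow> real \<Rightarrow> real" where
  "f_D_deriv D s = measure_pmf.expectation D (\<lambda>k. real k * s ^ (k - 1))"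

definition fbar_D :: "nat pmf \<Rightarrow> real \<Rightarrow> real" where
  "fbar_D D s = f_D_deriv D s / mean_D D"

definition g_Dp :: "nat pmf \<Rightarrow> real \<Rightarrow> real \<Rightarrow> real" where
  "g_Dp D p s = f_D D (1 - p + p * s)"

definition gbar_Dp :: "nat pmf \<Rightarrow> real \<Rightarrow> real \<Rightarrow> real" where
  "gbar_Dp D p s = fbar_D D (1 - p + p * s)"

definition z_Dp :: "nat pmf \<Rightarrow> real \<Rightarrow> real" where
  "z_Dp D p = Inf {s \<in> {0..1}. s = gbar_Dp D p s}"

definition q_Dp :: "nat pmf \<Rightarrow> real \<Rightarrow> real" where
  "q_Dp D p = g_Dp D p (z_Dp D p)"

end

theory Submission
  imports Defs
begin


definition tri :: "nat pmf \<Rightarrow> nat \<Rightarrow> bool" where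
  "tri D k \<longleftrightarrow> k \<ge> 1 \<and> pmf D 0 + pmf D k + pmf D (Suc k) = 1"

lemma tri_support:
  assumes "tri D k" "a \<in> set_pmf D"
  shows "a \<in> {0, k, Suc k}"
proof (rule ccontr)
  assume na: "a \<notin> {0, k, Suc k}"
  have k: "k \<ge> 1" "pmf D 0 + pmf D k + pmf D (Suc k) = 1" using assms(1) by (auto simp: tri_def)
  have "measure_pmf.prob D {a, 0, k, Suc k} \<le> 1" by (rule measure_pmf.prob_le_1)
  moreover have "measure_pmf.prob D {a, 0, k, Suc k} = pmf D a + pmf D 0 + pmf D k + pmf D (Suc k)"
    using na k(1) by (subst measure_measure_pmf_finite) auto
  moreover have "pmf D a > 0" using assms(2) by (simp add: pmf_positive)
  ultimately show False using k by linarith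
qed

lemma tri_expect:
  assumes "tri D k"
  shows "measure_pmf.expectation D f = f 0 * pmf D 0 + f k * pmf D k + f (Suc k) * pmf D (Suc k)"
proof -
  have k: "k \<ge> 1" using assms by (auto simp: tri_def)
  have "measure_pmf.expectation D f = (\<Sum>a\<in>{0, k, Suc k}. f a * pmf D a)"
    by (rule integral_measure_pmf_real) (use tri_support[OF assms] in auto)
  also have "\<dots> = f 0 * pmf D 0 + f k * pmf D k + f (Suc k) * pmf D (Suc k)"
    using k by simp
  finally show ?thesis .
qed

lemma mk_tri:
  assumes "k \<ge> 1" "x0 \<ge> 0" "a \<ge> 0" "b \<ge> 0" "x0 + a + b = 1"
  shows "\<exists>D. pmf D 0 = x0 \<and> pmf D k = a \<and> pmf D (Suc k) = b"
proof -
  let ?xs = "[(0::nat, x0), (k, a), (Suc k, b)]"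
  have wf: "pmf_of_list_wf ?xs" using assms by (intro pmf_of_list_wfI) auto
  show ?thesis
    by (rule exI[of _ "pmf_of_list ?xs"]) (use assms in \<open>simp add: pmf_pmf_of_list[OF wf]\<close>)
qed



lemma chain_above:
  fixes X Y S :: "nat \<Rightarrow> real"
  assumes X: "\<And>n. X (Suc n) \<le> X n"
    and YS: "\<And>n. Y n - Y (Suc n) = S n * (X n - X (Suc n))"
    and S: "\<And>n. S (Suc n) \<le> S n"
  shows "Y j \<ge> Y k + S k * (X j - X k)"
proof -
  define G where "G n = Y n - Y k - S k * (X n - X k)" for n
  have step: "G (Suc n) - G n = (S k - S n) * (X n - X (Suc n))" for n
    unfolding G_def using YS[of n] by (simp add: algebra_simps)
  have dec: "decseq S" using S by (rule decseq_SucI)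
  have up: "G (k + m) \<ge> 0" for m
  proof (induction m)
    case 0 then show ?case by (simp add: G_def)
  next
    case (Suc m)
    have "S (k + m) \<le> S k" using dec by (simp add: decseq_def)
    then have "(S k - S (k + m)) * (X (k + m) - X (Suc (k + m))) \<ge> 0"
      using X[of "k+m"] by simp
    then show ?case using step[of "k+m"] Suc by simp
  qed
  have down: "G (k - m) \<ge> 0" for m
  proof (induction m)
    case 0 then show ?case by (simp add: G_def)
  next
    case (Suc m)
    show ?case
    proof (cases "m < k")
      case True
      then have e: "Suc (k - Suc m) = k - m" by simp
      have "S k \<le> S (k - Suc m)" using dec by (simp add: decseq_def)
      then have "(S k - S (k - Suc m)) * (X (k - Suc m) - X (Suc (k - Suc m))) \<le> 0"
        using X[of "k - Suc m"] by (simp add: mult_nonpos_nonneg)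
      then show ?thesis using step[of "k - Suc m"] Suc e by simp
    next
      case False
      then have "k - Suc m = k - m" by simp
      then show ?thesis using Suc by simp
    qed
  qed
  have "G j \<ge> 0"
  proof (cases "j \<ge> k")
    case True
    then show ?thesis using up[of "j - k"] by simp
  next
    case False
    then show ?thesis using down[of "k - j"] by simp
  qed
  then show ?thesis by (simp add: G_def)
qed

definition cc :: "real \<Rightarrow> nat \<Rightarrow> real" where
  "cc t j = 1 - (real j + 1) * t ^ j + real j * t ^ (Suc j)"

definition HH :: "real \<Rightarrow> nat \<Rightarrow> real" where
  "HH t j = real j - (real j + 2) * t + (real j + 2) * t ^ (Suc j) - real j * t ^ (Suc (Suc j))"

lemma cc_step: "cc t (Suc j) - cc t j = (real j + 1) * t ^ j * (1 - t)^2"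
  unfolding cc_def by (simp add: power2_eq_square algebra_simps)

lemma HH_step: "HH t (Suc j) - HH t j = (1 - t) * cc t (Suc j)"
  unfolding cc_def HH_def by (simp add: power2_eq_square algebra_simps)

lemma HH_cc: "real j * cc t (Suc j) - t * (real j + 2) * cc t j = HH t j"
  unfolding cc_def HH_def by (simp add: power2_eq_square algebra_simps)

lemma cc_nonneg: assumes "0 \<le> t" shows "cc t j \<ge> 0"
proof (induction j)
  case 0 then show ?case by (simp add: cc_def)
next
  case (Suc j) then show ?case using cc_step[of t j] assms by (smt (verit) zero_le_power2 mult_nonneg_nonneg of_nat_0_le_iff zero_le_power)
qed

lemma cc_mono: assumes "0 \<le> t" shows "cc t j \<le> cc t (Suc j)"
  using cc_step[of t j] assms by (smt (verit) zero_le_power2 mult_nonneg_nonneg of_nat_0_le_iff zero_le_power)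

lemma cc_pos: assumes "0 \<le> t" "t < 1" shows "cc t (Suc j) > 0"
proof (induction j)
  case 0
  have "0 < (1-t)*(1-t)" using assms by simp
  then show ?case by (simp add: cc_def algebra_simps)
next
  case (Suc j) then show ?case using cc_mono[OF assms(1), of "Suc j"] by linarith
qed

lemma HH_nonneg: assumes "0 \<le> t" "t \<le> 1" shows "HH t j \<ge> 0"
proof (induction j)
  case 0 then show ?case by (simp add: HH_def)
next
  case (Suc j) then show ?case using HH_step[of t j] cc_nonneg[OF assms(1), of "Suc j"] assms
    by (smt (verit) mult_nonneg_nonneg)
qed



definition ell :: "real \<Rightarrow> nat \<Rightarrow> real" where
  "ell t j = (1 - t ^ j) / real j"

definition sa :: "real \<Rightarrow> nat \<Rightarrow> real" where
  "sa t j = t ^ (j - 1) * (1 - t) * real j * (real j + 1) / cc t j"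

definition su :: "real \<Rightarrow> nat \<Rightarrow> real" where
  "su t j = 1 / cc t j"

lemma ell_diff: "ell t (Suc n) - ell t (Suc (Suc n)) = cc t (Suc n) / ((real n + 1) * (real n + 2))"
  unfolding ell_def cc_def by (simp add: field_simps)

lemma ell_mono: assumes "0 \<le> t" "t < 1" shows "ell t (Suc (Suc n)) \<le> ell t (Suc n)"
  using ell_diff[of t n] cc_pos[OF assms, of n] by (smt (verit) divide_nonneg_pos mult_pos_pos of_nat_0_le_iff)

lemma sa_mono: assumes "0 \<le> t" "t < 1" shows "sa t (Suc (Suc n)) \<le> sa t (Suc n)"
proof -
  have c1: "cc t (Suc n) > 0" and c2: "cc t (Suc (Suc n)) > 0" using cc_pos[OF assms] by auto
  have H: "HH t (Suc n) \<ge> 0" using HH_nonneg assms by simp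
  have e: "(real n + 1) * cc t (Suc (Suc n)) - t * (real n + 3) * cc t (Suc n) = HH t (Suc n)"
    using HH_cc[of "Suc n" t] by (simp add: algebra_simps)
  have tp: "t ^ n * (1 - t) * (real n + 2) \<ge> 0" using assms by simp
  have key: "t ^ (Suc n) * (1 - t) * (real n + 2) * (real n + 3) * cc t (Suc n)
      \<le> t ^ n * (1 - t) * (real n + 1) * (real n + 2) * cc t (Suc (Suc n))"
  proof -
    have "t ^ n * (1 - t) * (real n + 1) * (real n + 2) * cc t (Suc (Suc n))
        - t ^ (Suc n) * (1 - t) * (real n + 2) * (real n + 3) * cc t (Suc n)
        = (t ^ n * (1 - t) * (real n + 2)) * HH t (Suc n)"
      by (subst e[symmetric]) (simp add: algebra_simps)
    also have "\<dots> \<ge> 0" using tp H by simp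
    finally show ?thesis by simp
  qed
  show ?thesis unfolding sa_def using c1 c2 key
    by (simp add: divide_simps) (simp add: algebra_simps)
qed

lemma su_mono: assumes "0 \<le> t" "t < 1" shows "su t (Suc (Suc n)) \<le> su t (Suc n)"
  unfolding su_def using cc_pos[OF assms, of n] cc_mono[OF assms(1), of "Suc n"]
  by (simp add: frac_le)

lemma line_a:
  assumes "0 \<le> t" "t < 1" "k \<ge> 1"
  shows "real j * t ^ (j - 1) \<ge> (t ^ (k - 1) - sa t k * ell t k) * real j + sa t k * (1 - t ^ j)"
proof (cases j)
  case 0 then show ?thesis by simp
next
  case (Suc n)
  obtain K where K: "k = Suc K" using assms(3) by (cases k) auto
  have "t ^ n \<ge> t ^ K + sa t (Suc K) * (ell t (Suc n) - ell t (Suc K))"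
  proof (rule chain_above[of "\<lambda>n. ell t (Suc n)" "\<lambda>n. t ^ n" "\<lambda>n. sa t (Suc n)"])
    show "ell t (Suc (Suc n)) \<le> ell t (Suc n)" for n using ell_mono[OF assms(1,2)] .
    show "sa t (Suc (Suc n)) \<le> sa t (Suc n)" for n using sa_mono[OF assms(1,2)] .
    show "t ^ n - t ^ Suc n = sa t (Suc n) * (ell t (Suc n) - ell t (Suc (Suc n)))" for n
      using cc_pos[OF assms(1,2), of n] unfolding ell_diff sa_def
      by (simp add: divide_simps) (simp add: algebra_simps)
  qed
  then have "real j * t ^ n \<ge> real j * (t ^ K + sa t (Suc K) * (ell t (Suc n) - ell t (Suc K)))"
    by (simp add: mult_left_mono)
  moreover have E: "1 - t ^ j = real j * ell t (Suc n)" using Suc unfolding ell_def by simp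
  have "(t ^ (k - 1) - sa t k * ell t k) * real j + sa t k * (1 - t ^ j)
     = real j * (t ^ K + sa t (Suc K) * (ell t (Suc n) - ell t (Suc K)))"
    unfolding E using K by (simp add: algebra_simps)
  ultimately show ?thesis using Suc by (simp add: add.commute)
qed

lemma line_u:
  assumes "0 \<le> t" "t < 1" "k \<ge> 1"
  shows "(if j = 0 then 0 else 1) \<ge> (1 / real k - su t k * ell t k) * real j + su t k * (1 - t ^ j)"
proof (cases j)
  case 0 then show ?thesis by simp
next
  case (Suc n)
  obtain K where K: "k = Suc K" using assms(3) by (cases k) auto
  have "1 / (real n + 1) \<ge> 1 / (real K + 1) + su t (Suc K) * (ell t (Suc n) - ell t (Suc K))"
  proof (rule chain_above[of "\<lambda>n. ell t (Suc n)" "\<lambda>n. 1 / (real n + 1)" "\<lambda>n. su t (Suc n)"])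
    show "ell t (Suc (Suc n)) \<le> ell t (Suc n)" for n using ell_mono[OF assms(1,2)] .
    show "su t (Suc (Suc n)) \<le> su t (Suc n)" for n using su_mono[OF assms(1,2)] .
    show "1 / (real n + 1) - 1 / (real (Suc n) + 1) = su t (Suc n) * (ell t (Suc n) - ell t (Suc (Suc n)))" for n
      using cc_pos[OF assms(1,2), of n] unfolding ell_diff su_def
      by (simp add: field_simps)
  qed
  from mult_left_mono[OF this, of "real j"]
  have "real j * (1 / (real n + 1)) \<ge> real j * (1 / (real K + 1) + su t (Suc K) * (ell t (Suc n) - ell t (Suc K)))"
    by simp
  moreover have E: "1 - t ^ j = real j * ell t (Suc n)" using Suc unfolding ell_def by simp
  moreover have "real j * (1 / (real n + 1)) = 1" using Suc by simp
  moreover have "(1 / real k - su t k * ell t k) * real j + su t k * (1 - t ^ j)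
     = real j * (1 / (real K + 1) + su t (Suc K) * (ell t (Suc n) - ell t (Suc K)))"
    unfolding E using K by (simp add: algebra_simps)
  ultimately show ?thesis using Suc by (simp add: add.commute)
qed



lemma integ_pow: "0 \<le> (t::real) \<Longrightarrow> t \<le> 1 \<Longrightarrow> integrable (measure_pmf D) (\<lambda>j::nat. t ^ j)"
  by (rule measure_pmf.integrable_const_bound[where B=1]) (auto simp: power_le_one)

lemma integ_der: "integrable (measure_pmf D) real \<Longrightarrow> 0 \<le> t \<Longrightarrow> t \<le> 1 \<Longrightarrow>
    integrable (measure_pmf D) (\<lambda>j::nat. real j * t ^ (j - 1))"
  by (erule Bochner_Integration.integrable_bound) (auto simp: power_le_one mult_left_le)

lemma integ_ind: "integrable (measure_pmf D) (\<lambda>j::nat. if j = 0 then 0 else (1::real))"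
  by (rule measure_pmf.integrable_const_bound[where B=1]) auto

lemma expect_lin:
  assumes "integrable (measure_pmf D) real" "0 \<le> t" "t \<le> 1"
  shows "measure_pmf.expectation D (\<lambda>j. A * real j + B * (1 - t ^ j)) = A * mean_D D + B * (1 - f_D D t)"
proof -
  have i1: "integrable (measure_pmf D) (\<lambda>j. A * real j)" using assms(1) by simp
  have i2: "integrable (measure_pmf D) (\<lambda>j. B * (1 - t ^ j))" using integ_pow[OF assms(2,3)] by simp
  show ?thesis
    unfolding mean_D_def f_D_def
    using i1 i2 integ_pow[OF assms(2,3), of D] assms(1)
    by (simp add: integral_diff)
qed

lemma sa_eq: assumes "0 \<le> t" "t < 1" "k \<ge> 1"
  shows "t ^ (k - 1) - t ^ k = sa t k * (ell t k - ell t (Suc k))"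
proof -
  obtain n where n: "k = Suc n" using assms(3) by (cases k) auto
  show ?thesis using cc_pos[OF assms(1,2), of n] unfolding n ell_diff sa_def
    by (simp add: divide_simps) (simp add: algebra_simps)
qed

lemma su_eq: assumes "0 \<le> t" "t < 1" "k \<ge> 1"
  shows "1 / real k - 1 / real (Suc k) = su t k * (ell t k - ell t (Suc k))"
proof -
  obtain n where n: "k = Suc n" using assms(3) by (cases k) auto
  show ?thesis using cc_pos[OF assms(1,2), of n] unfolding n ell_diff su_def
    by (simp add: field_simps)
qed



lemma tri_vals:
  assumes "tri D k"
  shows "mean_D D = real k * pmf D k + real (Suc k) * pmf D (Suc k)"
    "f_D D t = pmf D 0 + t ^ k * pmf D k + t ^ Suc k * pmf D (Suc k)"
    "f_D_deriv D t = real k * t ^ (k - 1) * pmf D k + real (Suc k) * t ^ k * pmf D (Suc k)"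
  unfolding mean_D_def f_D_def f_D_deriv_def by (subst tri_expect[OF assms]; simp)+

lemma mean_pos_support:
  assumes "integrable (measure_pmf D) real" "mean_D D > 0"
  shows "\<exists>j\<in>set_pmf D. j \<ge> 1"
proof (rule ccontr)
  assume "\<not> ?thesis"
  then have "\<And>a. a \<in> set_pmf D \<Longrightarrow> real a \<noteq> 0 \<Longrightarrow> a \<in> {}" by auto
  then have "mean_D D = (\<Sum>a\<in>{}. real a * pmf D a)" unfolding mean_D_def
    by (intro integral_measure_pmf_real) auto
  then show False using assms(2) by simp
qed

lemma red:
  fixes t \<mu> :: real
  assumes int: "integrable (measure_pmf D) real" and mu: "mean_D D = \<mu>" "\<mu> > 0"
    and t: "0 \<le> t" "t < 1"
  shows "\<exists>k D'. tri D' k \<and> mean_D D' = \<mu> \<and> f_D D' t = f_D D t \<and> f_D_deriv D' t \<le> f_D_deriv D t"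
proof -
  define \<Lambda> where "\<Lambda> = 1 - f_D D t"
  define L where "L = \<Lambda> / \<mu>"
  have t1: "t \<le> 1" using t by simp
  have ip: "integrable (measure_pmf D) (\<lambda>j. t ^ j)" using integ_pow[OF t(1) t1] .
  have "\<Lambda> = measure_pmf.expectation D (\<lambda>j. 0 * real j + 1 * (1 - t ^ j))"
    using expect_lin[OF int t(1) t1, of 0 1] by (simp add: \<Lambda>_def)
  also have "\<dots> \<le> measure_pmf.expectation D (\<lambda>j. (1 - t) * real j + 0 * (1 - t ^ j))"
  proof (rule integral_mono)
    show "integrable (measure_pmf D) (\<lambda>j. 0 * real j + 1 * (1 - t ^ j))" using ip by simp
    show "integrable (measure_pmf D) (\<lambda>j. (1 - t) * real j + 0 * (1 - t ^ j))" using int by simp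
    fix j :: nat
    have "1 + real j * (t - 1) \<le> (1 + (t - 1)) ^ j" by (rule Bernoulli_inequality) (use t in auto)
    then show "0 * real j + 1 * (1 - t ^ j) \<le> (1 - t) * real j + 0 * (1 - t ^ j)"
      by (simp add: algebra_simps)
  qed
  also have "\<dots> = (1 - t) * \<mu>" using expect_lin[OF int t(1) t1, of "1 - t" 0] mu by simp
  finally have Lub: "L \<le> ell t 1" unfolding L_def ell_def using mu by (simp add: divide_simps mult.commute)
  obtain j0 where j0: "j0 \<in> set_pmf D" "j0 \<ge> 1" using mean_pos_support[OF int] mu by auto
  have "0 < (1 - t ^ j0) * pmf D j0"
  proof -
    have "t ^ j0 < 1" using t j0(2) by (simp add: power_less_one_iff)
    then show ?thesis using j0(1) by (simp add: pmf_positive)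
  qed
  also have "(1 - t ^ j0) * pmf D j0 = measure_pmf.expectation D (\<lambda>j. (1 - t ^ j0) * indicator {j0} j)"
    by (simp add: measure_pmf_single)
  also have "\<dots> \<le> measure_pmf.expectation D (\<lambda>j. 0 * real j + 1 * (1 - t ^ j))"
  proof (rule integral_mono)
    show "integrable (measure_pmf D) (\<lambda>j. (1 - t ^ j0) * indicator {j0} j)"
      by (rule measure_pmf.integrable_const_bound[where B=1]) (use t in \<open>auto simp: indicator_def power_le_one\<close>)
    show "integrable (measure_pmf D) (\<lambda>j. 0 * real j + 1 * (1 - t ^ j))" using ip by simp
    fix j :: nat
    show "(1 - t ^ j0) * indicator {j0} j \<le> 0 * real j + 1 * (1 - t ^ j)"
      using t by (auto simp: indicator_def power_le_one)
  qed
  also have "\<dots> = \<Lambda>" using expect_lin[OF int t(1) t1, of 0 1] by (simp add: \<Lambda>_def)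
  finally have Lpos: "L > 0" unfolding L_def using mu by simp
  obtain N :: nat where N: "1 / L < real N" using reals_Archimedean2 by blast
  have N1: "N \<ge> 1" using N Lpos by (cases N) auto
  have "ell t N < L"
  proof -
    have "ell t N \<le> 1 / real N" unfolding ell_def using t N1 by (simp add: divide_right_mono)
    also have "\<dots> < L" using N Lpos N1 by (simp add: field_simps)
    finally show ?thesis .
  qed
  define j1 where "j1 = (LEAST j. j \<ge> 1 \<and> ell t j < L)"
  have j1: "j1 \<ge> 1 \<and> ell t j1 < L" unfolding j1_def
    by (rule LeastI[of _ N]) (use N1 \<open>ell t N < L\<close> in auto)
  have j1min: "\<And>j. j \<ge> 1 \<Longrightarrow> ell t j < L \<Longrightarrow> j1 \<le> j" unfolding j1_def by (rule Least_le) auto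
  have "j1 \<noteq> 1" using j1 Lub by auto
  then obtain k where k: "j1 = Suc k" "k \<ge> 1" using j1 by (cases j1) auto
  have Lk: "L \<le> ell t k" using j1min[of k] k by force
  have Lk1: "ell t (Suc k) < L" using j1 k by simp
  define d where "d = ell t k - ell t (Suc k)"
  have d: "d > 0" using Lk Lk1 by (simp add: d_def)
  define mk where "mk = \<mu> * (L - ell t (Suc k)) / d"
  define mk1 where "mk1 = \<mu> * (ell t k - L) / d"
  have mk: "mk \<ge> 0" "mk1 \<ge> 0" using d Lk Lk1 mu by (auto simp: mk_def mk1_def)
  have msum: "mk + mk1 = \<mu>"
  proof -
    have "mk + mk1 = \<mu> * (L - ell t (Suc k) + (ell t k - L)) / d"
      unfolding mk_def mk1_def add_divide_distrib[symmetric] by (simp add: ring_distribs)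
    also have "\<dots> = \<mu>" using d by (simp add: d_def)
    finally show ?thesis .
  qed
  have mL: "mk * ell t k + mk1 * ell t (Suc k) = \<Lambda>"
  proof -
    have "mk * ell t k + mk1 * ell t (Suc k) = (\<mu> * ((L - ell t (Suc k)) * ell t k + (ell t k - L) * ell t (Suc k))) / d"
      unfolding mk_def mk1_def add_divide_distrib[symmetric] times_divide_eq_left[symmetric] by (simp add: algebra_simps)
    also have "\<dots> = \<mu> * L * d / d" by (simp add: d_def algebra_simps)
    also have "\<dots> = \<Lambda>" using d mu by (simp add: L_def)
    finally show ?thesis .
  qed
  define xk where "xk = mk / real k"
  define xk1 where "xk1 = mk1 / real (Suc k)"
  have x: "xk \<ge> 0" "xk1 \<ge> 0" using mk by (auto simp: xk_def xk1_def)
  have kk: "k \<ge> 1" using k by simp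
  have "xk + xk1 = (1 / real k - su t k * ell t k) * \<mu> + su t k * \<Lambda>"
  proof -
    have "xk + xk1 = mk * (1 / real k) + mk1 * (1 / real (Suc k))" by (simp add: xk_def xk1_def)
    also have "1 / real (Suc k) = 1 / real k - su t k * (ell t k - ell t (Suc k))"
      using su_eq[OF t kk] by simp
    finally show ?thesis unfolding msum[symmetric] mL[symmetric] by (simp add: algebra_simps add_divide_distrib)
  qed
  also have "\<dots> = measure_pmf.expectation D (\<lambda>j. (1 / real k - su t k * ell t k) * real j + su t k * (1 - t ^ j))"
    using expect_lin[OF int t(1) t1] mu by (simp add: \<Lambda>_def)
  also have "\<dots> \<le> measure_pmf.expectation D (\<lambda>j. if j = 0 then 0 else 1)"
  proof (rule integral_mono)
    show "integrable (measure_pmf D) (\<lambda>j. (1 / real k - su t k * ell t k) * real j + su t k * (1 - t ^ j))"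
      using int ip by simp
    show "integrable (measure_pmf D) (\<lambda>j::nat. if j = 0 then 0 else (1::real))" by (rule integ_ind)
    show "(1 / real k - su t k * ell t k) * real j + su t k * (1 - t ^ j) \<le> (if j = 0 then 0 else 1)" for j
      by (rule line_u[OF t kk])
  qed
  also have "\<dots> \<le> 1"
    by (rule measure_pmf.integral_le_const) (auto intro: integ_ind)
  finally have xs: "xk + xk1 \<le> 1" .
  obtain D' where D': "pmf D' 0 = 1 - xk - xk1" "pmf D' k = xk" "pmf D' (Suc k) = xk1"
    using mk_tri[OF kk, of "1 - xk - xk1" xk xk1] x xs by auto
  have tri: "tri D' k" using D' kk by (simp add: tri_def)
  have mean': "mean_D D' = \<mu>"
    using tri_vals(1)[OF tri] D' kk msum by (simp add: xk_def xk1_def)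
  have f': "f_D D' t = f_D D t"
  proof -
    have "f_D D' t = 1 - (mk * ell t k + mk1 * ell t (Suc k))"
      using tri_vals(2)[OF tri, of t] D' kk
      by (simp add: xk_def xk1_def ell_def algebra_simps diff_divide_distrib add_divide_distrib)
    then show ?thesis using mL by (simp add: \<Lambda>_def)
  qed
  have "f_D_deriv D' t = mk * t ^ (k - 1) + mk1 * t ^ k"
    using tri_vals(3)[OF tri, of t] D' kk by (simp add: xk_def xk1_def)
  also have "\<dots> = (t ^ (k - 1) - sa t k * ell t k) * \<mu> + sa t k * \<Lambda>"
  proof -
    have "t ^ k = t ^ (k - 1) - sa t k * (ell t k - ell t (Suc k))" using sa_eq[OF t kk] by simp
    then have "mk * t ^ (k - 1) + mk1 * t ^ k = mk * t ^ (k - 1) + mk1 * (t ^ (k - 1) - sa t k * (ell t k - ell t (Suc k)))"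
      by simp
    then show ?thesis unfolding msum[symmetric] mL[symmetric] by (simp add: algebra_simps)
  qed
  also have "\<dots> = measure_pmf.expectation D (\<lambda>j. (t ^ (k - 1) - sa t k * ell t k) * real j + sa t k * (1 - t ^ j))"
    using expect_lin[OF int t(1) t1] mu by (simp add: \<Lambda>_def)
  also have "\<dots> \<le> f_D_deriv D t" unfolding f_D_deriv_def
  proof (rule integral_mono)
    show "integrable (measure_pmf D) (\<lambda>j. (t ^ (k - 1) - sa t k * ell t k) * real j + sa t k * (1 - t ^ j))"
      using int ip by simp
    show "integrable (measure_pmf D) (\<lambda>j. real j * t ^ (j - 1))" using integ_der[OF int t(1) t1] .
    show "(t ^ (k - 1) - sa t k * ell t k) * real j + sa t k * (1 - t ^ j) \<le> real j * t ^ (j - 1)" for j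
      by (rule line_a[OF t kk])
  qed
  finally show ?thesis using tri mean' f' by blast
qed



lemma r_range: "0 \<le> (p::real) \<Longrightarrow> p \<le> 1 \<Longrightarrow> 0 \<le> s \<Longrightarrow> s \<le> 1 \<Longrightarrow> 0 \<le> 1 - p + p * s \<and> 1 - p + p * s \<le> 1"
  by (auto intro: mult_left_le)

lemma fderiv_mono:
  assumes "integrable (measure_pmf D) real" "0 \<le> x" "x \<le> y" "y \<le> 1"
  shows "f_D_deriv D x \<le> f_D_deriv D y"
  unfolding f_D_deriv_def
proof (rule integral_mono)
  show "integrable (measure_pmf D) (\<lambda>j. real j * x ^ (j - 1))" using integ_der assms by auto
  show "integrable (measure_pmf D) (\<lambda>j. real j * y ^ (j - 1))" using integ_der assms by auto
  show "real j * x ^ (j - 1) \<le> real j * y ^ (j - 1)" for j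
    using assms by (intro mult_left_mono power_mono) auto
qed

lemma fD_mono:
  assumes "0 \<le> x" "x \<le> y" "y \<le> 1"
  shows "f_D D x \<le> f_D D y"
  unfolding f_D_def
proof (rule integral_mono)
  show "integrable (measure_pmf D) (\<lambda>j. x ^ j)" using integ_pow assms by auto
  show "integrable (measure_pmf D) (\<lambda>j. y ^ j)" using integ_pow assms by auto
  show "x ^ j \<le> y ^ j" for j using assms by (intro power_mono) auto
qed

lemma fD_bounds:
  assumes "0 \<le> x" "x \<le> 1"
  shows "0 \<le> f_D D x" "f_D D x \<le> 1"
  unfolding f_D_def using assms
  by (auto intro!: integral_nonneg_AE measure_pmf.integral_le_const integ_pow power_le_one)

lemma fderiv_nonneg: "0 \<le> x \<Longrightarrow> 0 \<le> f_D_deriv D x"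
  unfolding f_D_deriv_def by (auto intro!: integral_nonneg_AE)

lemma fderiv_one: "f_D_deriv D 1 = mean_D D"
  unfolding f_D_deriv_def mean_D_def by simp

definition RR :: "nat pmf \<Rightarrow> real \<Rightarrow> real set" where
  "RR D p = {s \<in> {0..1}. s = gbar_Dp D p s}"

lemma RR_one: "mean_D D > 0 \<Longrightarrow> 1 \<in> RR D p"
  unfolding RR_def gbar_Dp_def fbar_D_def by (simp add: fderiv_one)

lemma RR_bdd: "bdd_below (RR D p)"
  unfolding RR_def by (rule bdd_belowI[of _ 0]) auto

lemma z_props:
  assumes int: "integrable (measure_pmf D) real" and mu: "mean_D D > 0" and p: "0 < p" "p \<le> 1"
  shows "0 \<le> z_Dp D p" "z_Dp D p \<le> 1" "gbar_Dp D p (z_Dp D p) \<le> z_Dp D p"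
proof -
  have ne: "RR D p \<noteq> {}" using RR_one[OF mu] by auto
  have z: "z_Dp D p = Inf (RR D p)" unfolding z_Dp_def RR_def ..
  show z0: "0 \<le> z_Dp D p" unfolding z by (rule cInf_greatest[OF ne]) (auto simp: RR_def)
  show z1: "z_Dp D p \<le> 1" unfolding z by (rule cInf_lower[OF RR_one[OF mu] RR_bdd])
  show "gbar_Dp D p (z_Dp D p) \<le> z_Dp D p"
  proof (rule field_le_epsilon)
    fix e :: real assume e: "0 < e"
    obtain r where r: "r \<in> RR D p" "r < z_Dp D p + e"
      using cInf_lessD[OF ne, of "z_Dp D p + e"] e unfolding z by auto
    have zr: "z_Dp D p \<le> r" unfolding z by (rule cInf_lower[OF r(1) RR_bdd])
    have r1: "0 \<le> r" "r \<le> 1" "r = gbar_Dp D p r" using r(1) by (auto simp: RR_def)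
    have "gbar_Dp D p (z_Dp D p) \<le> gbar_Dp D p r"
      unfolding gbar_Dp_def fbar_D_def
    proof (rule divide_right_mono)
      show "f_D_deriv D (1 - p + p * z_Dp D p) \<le> f_D_deriv D (1 - p + p * r)"
        using r_range[of p "z_Dp D p"] r_range[of p r] p z0 z1 r1 zr
        by (intro fderiv_mono[OF int]) (auto intro: mult_left_mono)
    qed (use mu in simp)
    then show "gbar_Dp D p (z_Dp D p) \<le> z_Dp D p + e" using r1 r by linarith
  qed
qed

lemma q_bounds:
  assumes int: "integrable (measure_pmf D) real" and mu: "mean_D D > 0" and p: "0 < p" "p \<le> 1"
  shows "0 \<le> q_Dp D p" "q_Dp D p \<le> 1"
  using z_props[OF assms] r_range[of p "z_Dp D p"] p fD_bounds
  unfolding q_Dp_def g_Dp_def by auto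

lemma tri_integrable: "tri D k \<Longrightarrow> integrable (measure_pmf D) (f :: nat \<Rightarrow> real)"
  by (rule integrable_measure_pmf_finite, rule finite_subset[of _ "{0, k, Suc k}"]) (use tri_support in auto)

lemma K_tri:
  assumes tri: "tri D k" and mu: "mean_D D > 0" and p: "0 < p" "p \<le> 1"
    and s: "0 \<le> s" "s \<le> 1" "gbar_Dp D p s \<le> s"
  shows "q_Dp D p \<le> g_Dp D p s"
proof -
  have int: "integrable (measure_pmf D) real" by (rule tri_integrable[OF tri])
  define h where "h x = gbar_Dp D p x - x" for x
  have cont: "continuous_on {0..s} h"
    unfolding h_def gbar_Dp_def fbar_D_def tri_vals(3)[OF tri] by (intro continuous_intros) (use mu in auto)
  have h0: "0 \<le> h 0" unfolding h_def gbar_Dp_def fbar_D_def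
    using p mu by (auto intro!: divide_nonneg_pos fderiv_nonneg)
  have hs: "h s \<le> 0" unfolding h_def using s by simp
  obtain x where x: "0 \<le> x" "x \<le> s" "h x = 0" using IVT2'[of h s 0 0, OF hs h0 s(1) cont] by auto
  have xR: "x \<in> RR D p" using x s unfolding RR_def h_def by auto
  have "z_Dp D p \<le> x" unfolding z_Dp_def RR_def[symmetric] by (rule cInf_lower[OF xR RR_bdd])
  then have zs: "z_Dp D p \<le> s" using x by simp
  have z0: "0 \<le> z_Dp D p" using z_props[OF int mu p] by simp
  show ?thesis unfolding q_Dp_def g_Dp_def
    using r_range[of p "z_Dp D p"] r_range[of p s] p z0 zs s
    by (intro fD_mono) (auto intro: mult_left_mono)
qed



definition xkf :: "real \<Rightarrow> nat \<Rightarrow> real \<Rightarrow> real" where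
  "xkf \<mu> k b = (1 / real k) * (\<mu> - real (Suc k) * b)"

definition Gk :: "real \<Rightarrow> real \<Rightarrow> nat \<Rightarrow> real \<times> real \<Rightarrow> real" where
  "Gk \<mu> p k x = (1 / \<mu>) * (real k * (1 - p + p * snd x) ^ (k - 1) * xkf \<mu> k (fst x)
      + real (Suc k) * (1 - p + p * snd x) ^ k * fst x)"

definition Vk :: "real \<Rightarrow> real \<Rightarrow> nat \<Rightarrow> real \<times> real \<Rightarrow> real" where
  "Vk \<mu> p k x = (1 - xkf \<mu> k (fst x) - fst x) + (1 - p + p * snd x) ^ k * xkf \<mu> k (fst x)
      + (1 - p + p * snd x) ^ Suc k * fst x"

definition Sk :: "real \<Rightarrow> real \<Rightarrow> nat \<Rightarrow> (real \<times> real) set" where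
  "Sk \<mu> p k = {x. 0 \<le> fst x \<and> \<mu> - real k \<le> fst x \<and> fst x \<le> \<mu> / real (Suc k)
      \<and> 0 \<le> snd x \<and> snd x \<le> 1 \<and> Gk \<mu> p k x \<le> snd x}"

lemma Sk_compact: "compact (Sk \<mu> p k)"
proof (rule compact_eq_bounded_closed[THEN iffD2], rule conjI)
  show "bounded (Sk \<mu> p k)"
  proof (rule bounded_subset[OF bounded_cbox[of "(0, 0)" "(\<mu> / real (Suc k), 1)"]], rule subsetI)
    fix x assume "x \<in> Sk \<mu> p k"
    then obtain b s where "x = (b, s)" "0 \<le> b" "b \<le> \<mu> / real (Suc k)" "0 \<le> s" "s \<le> 1"
      unfolding Sk_def by (cases x) auto
    then show "x \<in> cbox (0, 0) (\<mu> / real (Suc k), 1)" by (simp add: cbox_interval)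
  qed
  have e: "Sk \<mu> p k = {x. 0 \<le> fst x} \<inter> {x. \<mu> - real k \<le> fst x} \<inter> {x. fst x \<le> \<mu> / real (Suc k)}
      \<inter> {x. 0 \<le> snd x} \<inter> {x. snd x \<le> 1} \<inter> {x. Gk \<mu> p k x \<le> snd x}"
    unfolding Sk_def by auto
  have c1: "closed {x::real\<times>real. 0 \<le> fst x}" by (rule closed_Collect_le) (intro continuous_intros)+
  have c2: "closed {x::real\<times>real. \<mu> - real k \<le> fst x}" by (rule closed_Collect_le) (intro continuous_intros)+
  have c3: "closed {x::real\<times>real. fst x \<le> \<mu> / real (Suc k)}" by (rule closed_Collect_le) (intro continuous_intros)+
  have c4: "closed {x::real\<times>real. 0 \<le> snd x}" by (rule closed_Collect_le) (intro continuous_intros)+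
  have c5: "closed {x::real\<times>real. snd x \<le> 1}" by (rule closed_Collect_le) (intro continuous_intros)+
  have c6: "closed {x. Gk \<mu> p k x \<le> snd x}" unfolding Gk_def xkf_def by (rule closed_Collect_le) (intro continuous_intros)+
  show "closed (Sk \<mu> p k)" unfolding e using c1 c2 c3 c4 c5 c6 by (intro closed_Int)
qed

lemma Vk_cont: "continuous_on A (Vk \<mu> p k)"
  unfolding Vk_def xkf_def by (intro continuous_intros)

lemma from_D:
  assumes D: "D \<in> B_class \<mu>" and tri: "tri D k" and mu: "\<mu> > 0" and p: "0 < p" "p \<le> 1"
  shows "(pmf D (Suc k), z_Dp D p) \<in> Sk \<mu> p k \<and> Vk \<mu> p k (pmf D (Suc k), z_Dp D p) = q_Dp D p"
proof -
  have int: "integrable (measure_pmf D) real" and m: "mean_D D = \<mu>" using D by (auto simp: B_class_def)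
  have k: "k \<ge> 1" "pmf D 0 + pmf D k + pmf D (Suc k) = 1" using tri by (auto simp: tri_def)
  have mean: "\<mu> = real k * pmf D k + real (Suc k) * pmf D (Suc k)" using tri_vals(1)[OF tri] m by simp
  have xk: "pmf D k = xkf \<mu> k (pmf D (Suc k))" unfolding xkf_def using mean k(1) by (simp add: field_simps)
  have z: "0 \<le> z_Dp D p" "z_Dp D p \<le> 1" "gbar_Dp D p (z_Dp D p) \<le> z_Dp D p"
    using z_props[OF int _ p] m mu by auto
  have b1: "\<mu> - real k \<le> pmf D (Suc k)"
  proof -
    have "real k * pmf D 0 = real k - real k * pmf D k - real k * pmf D (Suc k)"
    proof -
      have h: "real k * (pmf D 0 + pmf D k + pmf D (Suc k)) = real k" using k(2) by simp
      then show ?thesis unfolding distrib_left by linarith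
    qed
    moreover have "0 \<le> real k * pmf D 0" by simp
    moreover have "\<mu> = real k * pmf D k + real k * pmf D (Suc k) + pmf D (Suc k)" using mean by (simp add: algebra_simps)
    ultimately show ?thesis by linarith
  qed
  have b2: "pmf D (Suc k) \<le> \<mu> / real (Suc k)"
  proof -
    have "real (Suc k) * pmf D (Suc k) \<le> \<mu>" using mean by simp
    then show ?thesis by (simp add: pos_le_divide_eq mult.commute)
  qed
  have G: "Gk \<mu> p k (pmf D (Suc k), z_Dp D p) = gbar_Dp D p (z_Dp D p)"
    unfolding Gk_def gbar_Dp_def fbar_D_def tri_vals(3)[OF tri] m
    by (simp add: xk algebra_simps add_divide_distrib)
  have V: "Vk \<mu> p k (pmf D (Suc k), z_Dp D p) = q_Dp D p"
    unfolding Vk_def q_Dp_def g_Dp_def tri_vals(2)[OF tri]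
    using k by (simp add: xk algebra_simps)
  show ?thesis using b1 b2 z G V by (simp add: Sk_def)
qed

lemma to_D:
  assumes x: "x \<in> Sk \<mu> p k" and k: "k \<ge> 1" and mu: "\<mu> > 0" and p: "0 < p" "p \<le> 1"
  shows "\<exists>D. D \<in> B_class \<mu> \<and> tri D k \<and> q_Dp D p \<le> Vk \<mu> p k x"
proof -
  obtain b s where bs: "x = (b, s)" by (cases x)
  have c: "0 \<le> b" "\<mu> - real k \<le> b" "b \<le> \<mu> / real (Suc k)" "0 \<le> s" "s \<le> 1" "Gk \<mu> p k (b, s) \<le> s"
    using x by (auto simp: Sk_def bs)
  have "real (Suc k) * b \<le> \<mu>" using c(3) by (simp add: pos_le_divide_eq mult.commute)
  then have xk0: "xkf \<mu> k b \<ge> 0" unfolding xkf_def by simp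
  have x00: "1 - xkf \<mu> k b - b \<ge> 0"
  proof -
    have "real k * (1 - xkf \<mu> k b - b) = real k - \<mu> + b" unfolding xkf_def using k
      by (simp add: field_simps)
    moreover have "real k > 0" using k by simp
    moreover have "0 \<le> real k - \<mu> + b" using c(2) by simp
    ultimately have "0 \<le> real k * (1 - xkf \<mu> k b - b)" by simp
    then show ?thesis using \<open>real k > 0\<close> by (simp add: zero_le_mult_iff)
  qed
  obtain D where D: "pmf D 0 = 1 - xkf \<mu> k b - b" "pmf D k = xkf \<mu> k b" "pmf D (Suc k) = b"
    using mk_tri[OF k x00 xk0 c(1)] by auto
  have tri: "tri D k" using D k by (simp add: tri_def)
  have m: "mean_D D = \<mu>" using tri_vals(1)[OF tri] D k unfolding xkf_def by simp
  have B: "D \<in> B_class \<mu>" using m tri_integrable[OF tri] by (simp add: B_class_def)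
  have G: "gbar_Dp D p s = Gk \<mu> p k (b, s)"
    unfolding Gk_def gbar_Dp_def fbar_D_def tri_vals(3)[OF tri] m D by simp
  have "q_Dp D p \<le> g_Dp D p s" using K_tri[OF tri _ p c(4,5)] m mu G c(6) by simp
  also have "g_Dp D p s = Vk \<mu> p k x"
    unfolding g_Dp_def Vk_def tri_vals(2)[OF tri] D bs by simp
  finally show ?thesis using B tri by blast
qed

lemma attain_k:
  assumes ex: "\<exists>D\<in>B_class \<mu>. tri D k" and mu: "\<mu> > 0" and p: "0 < p" "p \<le> 1"
  shows "\<exists>Ds\<in>B_class \<mu>. tri Ds k \<and> (\<forall>D\<in>B_class \<mu>. tri D k \<longrightarrow> q_Dp Ds p \<le> q_Dp D p)"
proof -
  obtain D0 where D0: "D0 \<in> B_class \<mu>" "tri D0 k" using ex by auto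
  have k: "k \<ge> 1" using D0 by (simp add: tri_def)
  have ne: "Sk \<mu> p k \<noteq> {}" using from_D[OF D0 mu p] by auto
  obtain x where x: "x \<in> Sk \<mu> p k" "\<forall>y\<in>Sk \<mu> p k. Vk \<mu> p k x \<le> Vk \<mu> p k y"
    using continuous_attains_inf[OF Sk_compact ne Vk_cont] by blast
  obtain Ds where Ds: "Ds \<in> B_class \<mu>" "tri Ds k" "q_Dp Ds p \<le> Vk \<mu> p k x"
    using to_D[OF x(1) k mu p] by blast
  have "q_Dp Ds p \<le> q_Dp D p" if "D \<in> B_class \<mu>" "tri D k" for D
    using from_D[OF that mu p] x(2) Ds(3) by fastforce
  then show ?thesis using Ds by blast
qed



lemma exists_tri:
  assumes mu: "\<mu> > 0"
  shows "\<exists>D k. D \<in> B_class \<mu> \<and> tri D k"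
proof -
  define k where "k = nat \<lceil>\<mu>\<rceil>"
  have "(1::int) \<le> \<lceil>\<mu>\<rceil>" using mu by (simp add: one_le_ceiling)
  then have k1: "k \<ge> 1" by (simp add: k_def le_nat_iff)
  have kmu: "\<mu> \<le> real k" unfolding k_def by linarith
  have kpos: "real k > 0" using k1 by simp
  have a: "0 \<le> \<mu> / real k" "\<mu> / real k \<le> 1" using mu kmu kpos by (auto simp: divide_le_eq_1)
  obtain D where D: "pmf D 0 = 1 - \<mu> / real k" "pmf D k = \<mu> / real k" "pmf D (Suc k) = 0"
    using mk_tri[OF k1, of "1 - \<mu> / real k" "\<mu> / real k" 0] a by auto
  have tri: "tri D k" using D k1 by (simp add: tri_def)
  have "mean_D D = \<mu>" using tri_vals(1)[OF tri] D kpos by simp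
  then show ?thesis using tri tri_integrable[OF tri] by (auto simp: B_class_def)
qed

lemma reduce:
  assumes D: "D \<in> B_class \<mu>" and mu: "\<mu> > 0" and p: "0 < p" "p \<le> 1"
  shows "\<exists>k D'. D' \<in> B_class \<mu> \<and> tri D' k \<and> q_Dp D' p \<le> q_Dp D p"
proof -
  have int: "integrable (measure_pmf D) real" and m: "mean_D D = \<mu>" using D by (auto simp: B_class_def)
  have z: "0 \<le> z_Dp D p" "z_Dp D p \<le> 1" "gbar_Dp D p (z_Dp D p) \<le> z_Dp D p"
    using z_props[OF int _ p] m mu by auto
  show ?thesis
  proof (cases "z_Dp D p = 1")
    case True
    have e: "(^) (1::real) = (\<lambda>_::nat. 1)" by (rule ext) simp
    have q1: "q_Dp D p = 1" unfolding q_Dp_def g_Dp_def True f_D_def by (simp add: e)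
    obtain D' k where D': "D' \<in> B_class \<mu>" "tri D' k" using exists_tri[OF mu] by auto
    have "q_Dp D' p \<le> 1" using q_bounds[OF tri_integrable[OF D'(2)] _ p] D'(1) mu
      by (auto simp: B_class_def)
    then show ?thesis using D' q1 by auto
  next
    case False
    then have zl: "z_Dp D p < 1" using z by simp
    define t where "t = 1 - p + p * z_Dp D p"
    have t: "0 \<le> t" "t < 1" unfolding t_def using r_range[of p "z_Dp D p"] p z zl
      by (auto simp: algebra_simps)
    obtain k D' where D': "tri D' k" "mean_D D' = \<mu>" "f_D D' t = f_D D t" "f_D_deriv D' t \<le> f_D_deriv D t"
      using red[OF int m mu t] by blast
    have B: "D' \<in> B_class \<mu>" using D' tri_integrable[OF D'(1)] by (simp add: B_class_def)
    have "gbar_Dp D' p (z_Dp D p) \<le> gbar_Dp D p (z_Dp D p)"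
      unfolding gbar_Dp_def fbar_D_def t_def[symmetric] D'(2) m using D'(4) mu
      by (simp add: divide_right_mono)
    then have "gbar_Dp D' p (z_Dp D p) \<le> z_Dp D p" using z by simp
    then have "q_Dp D' p \<le> g_Dp D' p (z_Dp D p)" using K_tri[OF D'(1) _ p z(1,2)] D'(2) mu by simp
    also have "\<dots> = q_Dp D p" unfolding g_Dp_def q_Dp_def t_def[symmetric] D'(3) ..
    finally show ?thesis using B D'(1) by blast
  qed
qed

lemma tri_lower:
  assumes D: "D \<in> B_class \<mu>" and tri: "tri D k" and mu: "\<mu> > 0" and p: "0 < p" "p \<le> 1"
  shows "1 - \<mu> / real k \<le> q_Dp D p"
proof -
  have int: "integrable (measure_pmf D) real" and m: "mean_D D = \<mu>" using D by (auto simp: B_class_def)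
  have k: "k \<ge> 1" "pmf D 0 + pmf D k + pmf D (Suc k) = 1" using tri by (auto simp: tri_def)
  have z: "0 \<le> z_Dp D p" "z_Dp D p \<le> 1" using z_props[OF int _ p] m mu by auto
  define r where "r = 1 - p + p * z_Dp D p"
  have r: "0 \<le> r" using r_range[of p "z_Dp D p"] p z by (auto simp: r_def)
  have "q_Dp D p = pmf D 0 + r ^ k * pmf D k + r ^ Suc k * pmf D (Suc k)"
    unfolding q_Dp_def g_Dp_def tri_vals(2)[OF tri] r_def ..
  also have "\<dots> \<ge> pmf D 0" using r by simp
  finally have q0: "pmf D 0 \<le> q_Dp D p" .
  have mean: "\<mu> = real k * pmf D k + real (Suc k) * pmf D (Suc k)" using tri_vals(1)[OF tri] m by simp
  have "real k * (pmf D k + pmf D (Suc k)) \<le> \<mu>" using mean by (simp add: algebra_simps)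
  then have "pmf D k + pmf D (Suc k) \<le> \<mu> / real k" using k(1) by (simp add: pos_le_divide_eq mult.commute)
  then show ?thesis using q0 k(2) by linarith
qed

lemma main_attain:
  assumes mu: "\<mu> > 0" and p: "0 < p" "p \<le> 1"
  shows "\<exists>Ds k. Ds \<in> B_class \<mu> \<and> tri Ds k \<and> (\<forall>D\<in>B_class \<mu>. q_Dp Ds p \<le> q_Dp D p)"
proof (cases "\<forall>D\<in>B_class \<mu>. \<forall>k. tri D k \<longrightarrow> 1 \<le> q_Dp D p")
  case True
  obtain D0 k0 where D0: "D0 \<in> B_class \<mu>" "tri D0 k0" using exists_tri[OF mu] by auto
  have "q_Dp D0 p \<le> q_Dp D p" if D: "D \<in> B_class \<mu>" for D
  proof -
    obtain k D' where D': "D' \<in> B_class \<mu>" "tri D' k" "q_Dp D' p \<le> q_Dp D p"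
      using reduce[OF D mu p] by blast
    have "q_Dp D0 p \<le> 1" using q_bounds[OF tri_integrable[OF D0(2)] _ p] D0(1) mu
      by (auto simp: B_class_def)
    then show ?thesis using True D' by fastforce
  qed
  then show ?thesis using D0 by blast
next
  case False
  then obtain D1 k1 where D1: "D1 \<in> B_class \<mu>" "tri D1 k1" "q_Dp D1 p < 1" by force
  obtain N :: nat where N: "\<mu> / (1 - q_Dp D1 p) < real N" using reals_Archimedean2 by blast
  have Npos: "real N > 0" using N D1(3) mu by (smt (verit) divide_pos_pos)
  have gapN: "q_Dp D1 p < 1 - \<mu> / real N"
  proof -
    have "\<mu> < real N * (1 - q_Dp D1 p)" using N D1(3) by (simp add: divide_less_eq mult.commute)
    then have "\<mu> / real N < 1 - q_Dp D1 p" using Npos by (simp add: divide_less_eq mult.commute)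
    then show ?thesis by simp
  qed
  have big: "q_Dp D1 p < q_Dp D p" if "D \<in> B_class \<mu>" "tri D k" "k \<ge> N" for D k
  proof -
    have k1: "k \<ge> 1" using that(2) by (simp add: tri_def)
    have "\<mu> / real k \<le> \<mu> / real N" using that(3) Npos mu by (simp add: frac_le)
    then show ?thesis using tri_lower[OF that(1,2) mu p] gapN by linarith
  qed
  define K' where "K' = {k. k < N \<and> (\<exists>D\<in>B_class \<mu>. tri D k)}"
  have fin: "finite K'" unfolding K'_def by simp
  have k1K: "k1 \<in> K'"
  proof -
    have "\<not> k1 \<ge> N" using big[OF D1(1,2)] by auto
    then show ?thesis using D1 by (auto simp: K'_def)
  qed
  have "\<forall>k\<in>K'. \<exists>Ds. Ds \<in> B_class \<mu> \<and> tri Ds k \<and> (\<forall>D\<in>B_class \<mu>. tri D k \<longrightarrow> q_Dp Ds p \<le> q_Dp D p)"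
    using attain_k[OF _ mu p] unfolding K'_def by blast
  then obtain f where f: "\<And>k. k \<in> K' \<Longrightarrow> f k \<in> B_class \<mu> \<and> tri (f k) k \<and>
      (\<forall>D\<in>B_class \<mu>. tri D k \<longrightarrow> q_Dp (f k) p \<le> q_Dp D p)"
    by metis
  define m where "m = Min ((\<lambda>k. q_Dp (f k) p) ` K')"
  have "m \<in> (\<lambda>k. q_Dp (f k) p) ` K'" unfolding m_def using fin k1K by (intro Min_in) auto
  then obtain ks where ks: "ks \<in> K'" "q_Dp (f ks) p = m" by auto
  have mle: "m \<le> q_Dp (f k) p" if "k \<in> K'" for k unfolding m_def using fin that by (intro Min_le) auto
  have "q_Dp (f ks) p \<le> q_Dp D p" if D: "D \<in> B_class \<mu>" for D
  proof -
    obtain k D' where D': "D' \<in> B_class \<mu>" "tri D' k" "q_Dp D' p \<le> q_Dp D p"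
      using reduce[OF D mu p] by blast
    show ?thesis
    proof (cases "k < N")
      case True
      then have kK: "k \<in> K'" using D' by (auto simp: K'_def)
      have "q_Dp (f k) p \<le> q_Dp D' p" using f[OF kK] D' by blast
      then show ?thesis using mle[OF kK] ks D' by linarith
    next
      case False
      have "q_Dp D1 p < q_Dp D' p" using big[OF D'(1,2)] False by simp
      moreover have "q_Dp (f k1) p \<le> q_Dp D1 p" using f[OF k1K] D1 by blast
      ultimately show ?thesis using mle[OF k1K] ks D' by linarith
    qed
  qed
  then show ?thesis using f[OF ks(1)] by blast
qed

theorem theorem4p1:
  fixes \<mu> p :: real
  assumes "\<mu> > 0" and "0 < p" and "p \<le> 1"
  shows "\<exists>k::nat. k \<ge> 1 \<and> (\<exists>D\<in>B_class \<mu>.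
           pmf D 0 + pmf D k + pmf D (k + 1) = 1 \<and>
           q_Dp D p = (INF D'\<in>B_class \<mu>. q_Dp D' p))"
proof -
  obtain Ds k where Ds: "Ds \<in> B_class \<mu>" "tri Ds k" "\<forall>D\<in>B_class \<mu>. q_Dp Ds p \<le> q_Dp D p"
    using main_attain[OF assms] by blast
  have ne: "B_class \<mu> \<noteq> {}" using Ds(1) by auto
  have bdd: "bdd_below ((\<lambda>D. q_Dp D p) ` B_class \<mu>)"
  proof (rule bdd_belowI2[of _ 0])
    fix D assume "D \<in> B_class \<mu>"
    then show "0 \<le> q_Dp D p" using q_bounds[of D p] assms by (auto simp: B_class_def)
  qed
  have "q_Dp Ds p = (INF D'\<in>B_class \<mu>. q_Dp D' p)"
  proof (rule antisym)
    show "q_Dp Ds p \<le> (INF D'\<in>B_class \<mu>. q_Dp D' p)" using Ds(3) ne by (intro cINF_greatest) auto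
    show "(INF D'\<in>B_class \<mu>. q_Dp D' p) \<le> q_Dp Ds p" by (rule cINF_lower[OF bdd Ds(1)])
  qed
  then show ?thesis using Ds(1,2) by (auto simp: tri_def)
qed


end
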